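(* The functor $\Theta:\mathbf{FinGraph}^l_\star\to\mathbf{FinArb}^<_\star$ (defined below) is well-defined: for every connected, finite, pointed, edge-ordered graph $G$, $\Theta(G)$ is a finite edge-ordered arborescence, and for every lex-homomorphism $h:G\to H$, $\Theta(h)$ is a homomorphism of pointed edge-ordered graphs $\Theta(G)\to\Theta(H)$.
   Context: A (directed) graph is $(V,\to)$ with $\to\subseteq V\times V$; $N(u)$ is the set of outgoing edges of $u$. A pointed graph has a distinguished vertex $v_0$; connected means every vertex is reachable by a path from $v_0$. A path is a finite sequence $v_1\to\cdots\to v_n$ of vertices joined by edges; proper if no vertex repeats; co-initial paths share their source; $\pi\sqsubset\sigma$ means $\pi$ is a proper prefix of $\sigma$. A finite edge-ordered graph is a finite graph with a strict linear order $\triangleleft$ on each neighborhood. Lexicographic path order: if $\pi\sqsubset\sigma$ then $\pi\prec\sigma$ (symmetrically); otherwise, with $\zeta$ the longest common prefix, $u$ its target and $v_1,v_2$ the next vertices, $\pi\prec\sigma$ iff $u\to v_1\triangleleft u\to v_2$. $\min(u\rightsquigarrow v)$ is the $\prec$-least proper path from $u$ to $v$. A homomorphism of finite pointed edge-ordered graphs $h:G\to H$ is a vertex map with (i) $u\to v$ implies $h(u)\to h(v)$; (ii) the distinguished vertex of $G$ is the unique vertex mapped to the distinguished vertex of $H$; (iii) $u\to v_1\triangleleft u\to v_2$ implies $h(u)\to h(v_1)\triangleleft h(u)\to h(v_2)$. A lex-homomorphism additionally satisfies (iv) $h(\min(u\rightsquigarrow v))=\min(h(u)\rightsquigarrow h(v))$,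 where $h$ is applied to paths vertexwise. An arborescence is a pointed graph with a unique path $v_0\rightsquigarrow u$ for every vertex $u$. $\mathbf{FinGraph}^l_\star$: connected, finite, pointed, edge-ordered graphs with lex-homomorphisms; $\mathbf{FinArb}^<_\star$: finite edge-ordered arborescences with homomorphisms of pointed edge-ordered graphs. $\Theta(G)$ has the vertices and distinguished vertex of $G$, contains an edge $u\to v$ iff $u\to v$ is an edge of $\min(v_0\rightsquigarrow v)$ in $G$, and orders co-initial edges as in $G$; $\Theta(h)(v)=h(v)$. *)

theory Defs
  imports Main "HOL-Library.Sublist"
begin

text \<open>A pointed edge-ordered graph. The edge order on the neighbourhood N(u)
  is represented by a relation on targets: eord G u v1 v2 means
  that edge u->v1 precedes edge u->v2.\<close>
record 'a eograph =
  verts :: "'a set"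
  arcs  :: "('a \<times> 'a) set"
  root  :: 'a
  eord  :: "'a \<Rightarrow> 'a \<Rightarrow> 'a \<Rightarrow> bool"

definition nbhd :: "('a, 'b) eograph_scheme \<Rightarrow> 'a \<Rightarrow> 'a set" where
  "nbhd G u = {v. (u, v) \<in> arcs G}"

definition strict_linear_on :: "'a set \<Rightarrow> ('a \<Rightarrow> 'a \<Rightarrow> bool) \<Rightarrow> bool" where
  "strict_linear_on A r \<longleftrightarrow>
     (\<forall>x\<in>A. \<not> r x x) \<and>
     (\<forall>x\<in>A. \<forall>y\<in>A. \<forall>z\<in>A. r x y \<longrightarrow> r y z \<longrightarrow> r x z) \<and>
     (\<forall>x\<in>A. \<forall>y\<in>A. x \<noteq> y \<longrightarrow> r x y \<or> r y x)"

definition pointed_eo_graph :: "('a, 'b) eograph_scheme \<Rightarrow> bool" where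
  "pointed_eo_graph G \<longleftrightarrow>
     arcs G \<subseteq> verts G \<times> verts G \<and> root G \<in> verts G \<and>
     (\<forall>u v1 v2. eord G u v1 v2 \<longrightarrow> (u, v1) \<in> arcs G \<and> (u, v2) \<in> arcs G) \<and>
     (\<forall>u\<in>verts G. strict_linear_on (nbhd G u) (eord G u))"

definition is_path :: "('a, 'b) eograph_scheme \<Rightarrow> 'a list \<Rightarrow> bool" where
  "is_path G p \<longleftrightarrow> p \<noteq> [] \<and> set p \<subseteq> verts G \<and>
     (\<forall>i. Suc i < length p \<longrightarrow> (p ! i, p ! Suc i) \<in> arcs G)"

definition paths_from_to :: "('a, 'b) eograph_scheme \<Rightarrow> 'a \<Rightarrow> 'a \<Rightarrow> 'a list set" where
  "paths_from_to G u v = {p. is_path G p \<and> hd p = u \<and> last p = v}"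

definition proper_paths :: "('a, 'b) eograph_scheme \<Rightarrow> 'a \<Rightarrow> 'a \<Rightarrow> 'a list set" where
  "proper_paths G u v = {p \<in> paths_from_to G u v. distinct p}"

definition connected_graph :: "('a, 'b) eograph_scheme \<Rightarrow> bool" where
  "connected_graph G \<longleftrightarrow> (\<forall>v\<in>verts G. paths_from_to G (root G) v \<noteq> {})"

definition path_less :: "('a, 'b) eograph_scheme \<Rightarrow> 'a list \<Rightarrow> 'a list \<Rightarrow> bool" where
  "path_less G p q \<longleftrightarrow> strict_prefix p q \<or>
     (\<exists>z v1 v2 r1 r2. z \<noteq> [] \<and> p = z @ v1 # r1 \<and> q = z @ v2 # r2 \<and>
        eord G (last z) v1 v2)"

definition min_path :: "('a, 'b) eograph_scheme \<Rightarrow> 'a \<Rightarrow> 'a \<Rightarrow> 'a list" where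
  "min_path G u v = (THE p. p \<in> proper_paths G u v \<and>
       (\<forall>q \<in> proper_paths G u v. q \<noteq> p \<longrightarrow> path_less G p q))"

definition fin_conn_graph :: "('a, 'b) eograph_scheme \<Rightarrow> bool" where
  "fin_conn_graph G \<longleftrightarrow> pointed_eo_graph G \<and> finite (verts G) \<and> connected_graph G"

definition arborescence :: "('a, 'b) eograph_scheme \<Rightarrow> bool" where
  "arborescence G \<longleftrightarrow> (\<forall>u\<in>verts G. \<exists>!p. p \<in> paths_from_to G (root G) u)"

definition fin_arb :: "('a, 'b) eograph_scheme \<Rightarrow> bool" where
  "fin_arb G \<longleftrightarrow> pointed_eo_graph G \<and> finite (verts G) \<and> arborescence G"

definition eo_hom :: "('a, 'c) eograph_scheme \<Rightarrow> ('b, 'd) eograph_scheme \<Rightarrow> ('a \<Rightarrow> 'b) \<Rightarrow> bool" where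
  "eo_hom G H h \<longleftrightarrow>
     (\<forall>u\<in>verts G. h u \<in> verts H) \<and>
     (\<forall>u v. (u, v) \<in> arcs G \<longrightarrow> (h u, h v) \<in> arcs H) \<and>
     (\<forall>u\<in>verts G. h u = root H \<longleftrightarrow> u = root G) \<and>
     (\<forall>u v1 v2. eord G u v1 v2 \<longrightarrow> eord H (h u) (h v1) (h v2))"

definition lex_hom :: "('a, 'c) eograph_scheme \<Rightarrow> ('b, 'd) eograph_scheme \<Rightarrow> ('a \<Rightarrow> 'b) \<Rightarrow> bool" where
  "lex_hom G H h \<longleftrightarrow> eo_hom G H h \<and>
     (\<forall>u\<in>verts G. \<forall>v\<in>verts G. proper_paths G u v \<noteq> {} \<longrightarrow>
        map h (min_path G u v) = min_path H (h u) (h v))"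

definition theta_arcs :: "('a, 'b) eograph_scheme \<Rightarrow> ('a \<times> 'a) set" where
  "theta_arcs G = {(u, v). v \<in> verts G \<and>
      (\<exists>i. Suc i < length (min_path G (root G) v) \<and>
           min_path G (root G) v ! i = u \<and> min_path G (root G) v ! Suc i = v)}"

definition Theta :: "('a, 'b) eograph_scheme \<Rightarrow> 'a eograph" where
  "Theta G = \<lparr> verts = verts G, arcs = theta_arcs G, root = root G,
     eord = (\<lambda>u v1 v2. eord G u v1 v2 \<and> (u, v1) \<in> theta_arcs G \<and> (u, v2) \<in> theta_arcs G) \<rparr>"

end

theory Submission
  imports Defs
begin


lemma is_path_succ: "is_path G p \<longleftrightarrow> p \<noteq> [] \<and> set p \<subseteq> verts G \<and> successively (\<lambda>x y. (x,y) \<in> arcs G) p"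
  unfolding is_path_def successively_conv_nth by simp

lemma eord_facts:
  assumes "pointed_eo_graph G" "eord G u a b"
  shows "u \<in> verts G" "a \<in> nbhd G u" "b \<in> nbhd G u"
  using assms unfolding pointed_eo_graph_def nbhd_def by auto

lemma eord_irrefl: assumes "pointed_eo_graph G" shows "\<not> eord G u a a"
proof
  assume e: "eord G u a a"
  from eord_facts[OF assms e] assms e show False
    unfolding pointed_eo_graph_def strict_linear_on_def by blast
qed

lemma eord_trans: assumes "pointed_eo_graph G" "eord G u a b" "eord G u b c" shows "eord G u a c"
  using eord_facts[OF assms(1,2)] eord_facts[OF assms(1,3)] assms
  unfolding pointed_eo_graph_def strict_linear_on_def by blast

lemma path_less_idx:
  "path_less G p q \<longleftrightarrow> (length p < length q \<and> take (length p) q = p) \<or>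
     (\<exists>i. 0 < i \<and> i < length p \<and> i < length q \<and> take i p = take i q \<and>
        eord G (p!(i-1)) (p!i) (q!i))"
proof
  assume "path_less G p q"
  then show "(length p < length q \<and> take (length p) q = p) \<or>
     (\<exists>i. 0 < i \<and> i < length p \<and> i < length q \<and> take i p = take i q \<and>
        eord G (p!(i-1)) (p!i) (q!i))"
    unfolding path_less_def
  proof
    assume "strict_prefix p q" then show ?thesis
      by (metis append_eq_conv_conj prefix_def prefix_length_le nat_less_le prefix_order.less_le_not_le prefix_length_prefix strict_prefix_def)
  next
    assume "\<exists>z v1 v2 r1 r2. z \<noteq> [] \<and> p = z @ v1 # r1 \<and> q = z @ v2 # r2 \<and> eord G (last z) v1 v2"
    then obtain z v1 v2 r1 r2 where h: "z \<noteq> []" "p = z @ v1 # r1" "q = z @ v2 # r2" "eord G (last z) v1 v2" by blast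
    have "last z = p ! (length z - 1)" using h by (simp add: last_conv_nth nth_append)
    then show ?thesis using h
      by (intro disjI2 exI[of _ "length z"]) auto
  qed
next
  assume "(length p < length q \<and> take (length p) q = p) \<or>
     (\<exists>i. 0 < i \<and> i < length p \<and> i < length q \<and> take i p = take i q \<and>
        eord G (p!(i-1)) (p!i) (q!i))"
  then show "path_less G p q"
  proof
    assume "length p < length q \<and> take (length p) q = p"
    then show ?thesis unfolding path_less_def strict_prefix_def
      by (metis append_take_drop_id nat_less_le prefixI)
  next
    assume "\<exists>i. 0 < i \<and> i < length p \<and> i < length q \<and> take i p = take i q \<and>
        eord G (p!(i-1)) (p!i) (q!i)"
    then obtain i where h: "0 < i" "i < length p" "i < length q" "take i p = take i q"
        "eord G (p!(i-1)) (p!i) (q!i)" by blast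
    have p: "p = take i p @ p!i # drop (Suc i) p" using h by (metis id_take_nth_drop)
    have q: "q = take i p @ q!i # drop (Suc i) q" using h by (metis id_take_nth_drop)
    have l: "last (take i p) = p!(i-1)" using h(1,2) by (subst last_conv_nth) auto
    show ?thesis unfolding path_less_def
    proof (rule disjI2)
      have ne: "take i p \<noteq> []" using h(1,2) by auto
      from h(5) have e: "eord G (last (take i p)) (p!i) (q!i)" using l by simp
      show "\<exists>z v1 v2 r1 r2. z \<noteq> [] \<and> p = z @ v1 # r1 \<and> q = z @ v2 # r2 \<and> eord G (last z) v1 v2"
        using ne p q e by blast
    qed
  qed
qed

lemma path_less_irrefl: assumes "pointed_eo_graph G" shows "\<not> path_less G p p"
  using eord_irrefl[OF assms] unfolding path_less_idx by auto

lemma take_pref_take: "take n r = q \<Longrightarrow> i \<le> n \<Longrightarrow> take i q = take i r"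
  by (metis min.absorb1 take_take)
lemma take_pref_nth: "take n r = q \<Longrightarrow> i < n \<Longrightarrow> q ! i = r ! i"
  by (metis nth_take)

lemma path_less_trans:
  assumes G: "pointed_eo_graph G" and pq: "path_less G p q" and qr: "path_less G q r"
  shows "path_less G p r"
proof -
  show ?thesis using pq qr unfolding path_less_idx[of G p q] path_less_idx[of G q r]
  proof (elim disjE exE conjE)
    assume a: "length p < length q" "take (length p) q = p" "length q < length r" "take (length q) r = q"
    have "take (length p) r = p" using take_pref_take[OF a(4), of "length p"] a by simp
    then show ?thesis unfolding path_less_idx[of G p r] using a by simp
  next
    fix i assume a: "length p < length q" "take (length p) q = p" "0 < i" "i < length q" "i < length r"
      "take i q = take i r" "eord G (q ! (i - 1)) (q ! i) (r ! i)"
    show ?thesis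
    proof (cases "length p \<le> i")
      case True
      have "take (length p) r = take (length p) (take i r)" using True by (simp add: min_def)
      also have "\<dots> = take (length p) (take i q)" using a(6) by simp
      also have "\<dots> = take (length p) q" using True by (simp add: min_def)
      finally have "take (length p) r = p" using a(2) by simp
      then show ?thesis unfolding path_less_idx[of G p r] using a True by auto
    next
      case False
      have x: "take i p = take i q" using take_pref_take[OF a(2), of i] False by simp
      have "p ! (i-1) = q ! (i-1)" "p ! i = q ! i" using take_pref_nth[OF a(2)] False a(3) by auto
      then show ?thesis unfolding path_less_idx[of G p r] using a False x by (intro disjI2 exI[of _ i]) auto
    qed
  next
    fix i assume a: "0 < i" "i < length p" "i < length q" "take i p = take i q" "eord G (p ! (i - 1)) (p ! i) (q ! i)"
      "length q < length r" "take (length q) r = q"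
    have "take i p = take i r" "q ! i = r ! i"
      using take_pref_take[OF a(7), of i] take_pref_nth[OF a(7), of i] a by auto
    then show ?thesis unfolding path_less_idx[of G p r] using a by (intro disjI2 exI[of _ i]) auto
  next
    fix i j assume a: "0 < i" "i < length p" "i < length q" "take i p = take i q" "eord G (p ! (i - 1)) (p ! i) (q ! i)"
      "0 < j" "j < length q" "j < length r" "take j q = take j r" "eord G (q ! (j - 1)) (q ! j) (r ! j)"
    consider "i = j" | "i < j" | "j < i" by linarith
    then show ?thesis
    proof cases
      case 1
      have "p ! (i-1) = q ! (i-1)" using take_pref_nth[OF a(4)[symmetric], of "i-1"] a(1)
        take_pref_nth[of i q "take i q" "i-1"] by simp
      then show ?thesis unfolding path_less_idx[of G p r] using a 1 eord_trans[OF G] by (intro disjI2 exI[of _ i]) auto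
    next
      case 2
      have "take i q = take i r" "q ! i = r ! i" using a 2
        take_pref_take[OF a(9)[symmetric], of i] take_pref_take[of j q "take j q" i]
        take_pref_nth[OF a(9)[symmetric], of i] take_pref_nth[of j q "take j q" i] by auto
      then show ?thesis unfolding path_less_idx[of G p r] using a 2 by (intro disjI2 exI[of _ i]) auto
    next
      case 3
      have "take j p = take j q" "p ! j = q ! j" "p ! (j-1) = q ! (j-1)" using a 3
        take_pref_take[OF a(4), of j] take_pref_take[of i p "take i p" j]
        take_pref_nth[OF a(4)] take_pref_nth[of i p "take i p"] by auto
      then show ?thesis unfolding path_less_idx[of G p r] using a 3 by (intro disjI2 exI[of _ j]) auto
    qed
  qed
qed

lemma path_less_total:
  assumes G: "pointed_eo_graph G" and p: "is_path G p" and q: "is_path G q"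
    and h: "hd p = hd q" and ne: "p \<noteq> q"
  shows "path_less G p q \<or> path_less G q p"
proof (cases p q rule: prefix_cases)
  case 1 then show ?thesis using ne unfolding path_less_def strict_prefix_def by blast
next
  case 2 then show ?thesis unfolding path_less_def by blast
next
  case 3
  from parallel_decomp[OF 3] obtain as b bs c cs where d: "b \<noteq> c" "p = as @ b # bs" "q = as @ c # cs" by blast
  have asne: "as \<noteq> []" using d h by auto
  let ?k = "length as - 1"
  have "Suc ?k < length p" "Suc ?k < length q" using d asne by auto
  then have "(p ! ?k, p ! Suc ?k) \<in> arcs G" "(q ! ?k, q ! Suc ?k) \<in> arcs G"
    using p q unfolding is_path_def by auto
  moreover have "p ! ?k = last as" "q ! ?k = last as" "p ! Suc ?k = b" "q ! Suc ?k = c"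
    using d asne by (auto simp: nth_append last_conv_nth)
  ultimately have ab: "b \<in> nbhd G (last as)" "c \<in> nbhd G (last as)" "last as \<in> verts G"
    using G unfolding nbhd_def pointed_eo_graph_def by auto
  then have "eord G (last as) b c \<or> eord G (last as) c b"
    using G d(1) unfolding pointed_eo_graph_def strict_linear_on_def by blast
  then show ?thesis unfolding path_less_def using d asne by blast
qed



lemma finite_proper: assumes "finite (verts G)" shows "finite (proper_paths G u v)"
proof (rule finite_subset)
  show "proper_paths G u v \<subseteq> {xs. set xs \<subseteq> verts G \<and> length xs \<le> card (verts G)}"
  proof
    fix xs assume "xs \<in> proper_paths G u v"
    then have "distinct xs" "set xs \<subseteq> verts G"
      unfolding proper_paths_def paths_from_to_def is_path_def by auto
    then show "xs \<in> {xs. set xs \<subseteq> verts G \<and> length xs \<le> card (verts G)}"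
      using card_mono[OF assms \<open>set xs \<subseteq> verts G\<close>] distinct_card[OF \<open>distinct xs\<close>] by simp
  qed
  show "finite {xs. set xs \<subseteq> verts G \<and> length xs \<le> card (verts G)}"
    by (rule finite_lists_length_le[OF assms])
qed

lemma min_exists:
  assumes G: "pointed_eo_graph G" and fin: "finite S" and ne: "S \<noteq> {}"
  shows "(\<forall>p\<in>S. is_path G p \<and> hd p = u) \<longrightarrow> (\<exists>m\<in>S. \<forall>q\<in>S. q \<noteq> m \<longrightarrow> path_less G m q)"
  using fin ne
proof (induction S rule: finite_ne_induct)
  case (singleton x) then show ?case by simp
next
  case (insert x F)
  show ?case
  proof
    assume a: "\<forall>p\<in>insert x F. is_path G p \<and> hd p = u"
    then obtain m where m: "m \<in> F" "\<forall>q\<in>F. q \<noteq> m \<longrightarrow> path_less G m q" using insert by auto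
    have mx: "m \<noteq> x" using m insert by auto
    show "\<exists>m\<in>insert x F. \<forall>q\<in>insert x F. q \<noteq> m \<longrightarrow> path_less G m q"
    proof (cases "path_less G x m")
      case True
      then show ?thesis using m path_less_trans[OF G True] by (intro bexI[of _ x]) auto
    next
      case False
      then have "path_less G m x" using path_less_total[OF G, of m x] a m mx by auto
      then show ?thesis using m by (intro bexI[of _ m]) auto
    qed
  qed
qed

lemma min_path_prop:
  assumes G: "pointed_eo_graph G" and fin: "finite (verts G)" and ne: "proper_paths G u v \<noteq> {}"
  shows "min_path G u v \<in> proper_paths G u v \<and>
    (\<forall>q\<in>proper_paths G u v. q \<noteq> min_path G u v \<longrightarrow> path_less G (min_path G u v) q)"
proof -
  have "\<forall>p\<in>proper_paths G u v. is_path G p \<and> hd p = u"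
    unfolding proper_paths_def paths_from_to_def by auto
  then obtain m where m: "m \<in> proper_paths G u v" "\<forall>q\<in>proper_paths G u v. q \<noteq> m \<longrightarrow> path_less G m q"
    using min_exists[OF G finite_proper[OF fin] ne] by blast
  have "\<exists>!p. p \<in> proper_paths G u v \<and> (\<forall>q \<in> proper_paths G u v. q \<noteq> p \<longrightarrow> path_less G p q)"
  proof (rule ex1I[of _ m])
    show "m \<in> proper_paths G u v \<and> (\<forall>q \<in> proper_paths G u v. q \<noteq> m \<longrightarrow> path_less G m q)" using m by blast
  next
    fix p assume p: "p \<in> proper_paths G u v \<and> (\<forall>q \<in> proper_paths G u v. q \<noteq> p \<longrightarrow> path_less G p q)"
    show "p = m"
    proof (rule ccontr)
      assume "p \<noteq> m"
      then have "path_less G p m" "path_less G m p" using p m by auto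
      then show False using path_less_trans[OF G] path_less_irrefl[OF G] by blast
    qed
  qed
  then show ?thesis unfolding min_path_def by (rule theI')
qed

lemma min_path_eq:
  assumes G: "pointed_eo_graph G" and m: "m \<in> proper_paths G u v" "\<forall>q\<in>proper_paths G u v. q \<noteq> m \<longrightarrow> path_less G m q"
  shows "min_path G u v = m"
  unfolding min_path_def
proof (rule the_equality)
  show "m \<in> proper_paths G u v \<and> (\<forall>q \<in> proper_paths G u v. q \<noteq> m \<longrightarrow> path_less G m q)" using m by blast
next
  fix p assume p: "p \<in> proper_paths G u v \<and> (\<forall>q \<in> proper_paths G u v. q \<noteq> p \<longrightarrow> path_less G p q)"
  show "p = m"
  proof (rule ccontr)
    assume "p \<noteq> m"
    then have "path_less G p m" "path_less G m p" using p m by auto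
    then show False using path_less_trans[OF G] path_less_irrefl[OF G] by blast
  qed
qed



lemma shorten_path:
  "is_path G p \<Longrightarrow> \<exists>q. is_path G q \<and> distinct q \<and> hd q = hd p \<and> last q = last p"
proof (induction "length p" arbitrary: p rule: less_induct)
  case less
  show ?case
  proof (cases "distinct p")
    case True then show ?thesis using less.prems by blast
  next
    case False
    then obtain xs y ys zs where d: "p = xs @ [y] @ ys @ [y] @ zs" using not_distinct_decomp by blast
    let ?p = "xs @ [y] @ zs"
    have "is_path G ?p" using less.prems unfolding is_path_succ d
      by (auto simp: successively_append_iff successively_Cons split: if_splits)
    moreover have "hd ?p = hd p" "last ?p = last p" using d by (auto simp: hd_append)
    moreover have "length ?p < length p" using d by simp
    ultimately show ?thesis using less.hyps by metis
  qed
qed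

lemma conn_proper:
  assumes "connected_graph G" "v \<in> verts G"
  shows "proper_paths G (root G) v \<noteq> {}"
proof -
  obtain p where "p \<in> paths_from_to G (root G) v" using assms unfolding connected_graph_def by blast
  then show ?thesis using shorten_path[of G p]
    unfolding proper_paths_def paths_from_to_def by auto
qed



lemma take_path:
  assumes "is_path G m" "k < length m"
  shows "is_path G (take (Suc k) m)"
  using assms unfolding is_path_def by (auto dest: in_set_takeD)

lemma min_prefix:
  assumes G: "pointed_eo_graph G" and fin: "finite (verts G)"
    and ne: "proper_paths G u v \<noteq> {}" and k: "k < length (min_path G u v)"
  shows "min_path G u (min_path G u v ! k) = take (Suc k) (min_path G u v)"
proof -
  define m where "m = min_path G u v"
  note mp = min_path_prop[OF G fin ne, folded m_def]
  have mpath: "is_path G m" "distinct m" "hd m = u" "last m = v"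
    using mp unfolding proper_paths_def paths_from_to_def by auto
  have k': "k < length m" using k m_def by simp
  define w where "w = m ! k"
  define p' where "p' = take (Suc k) m"
  have lt: "last (take (Suc k) m) = m ! k" using k' by (subst last_conv_nth) auto
  have p'in: "p' \<in> proper_paths G u w"
    unfolding proper_paths_def paths_from_to_def p'_def w_def
    using take_path[OF mpath(1) k'] mpath k' lt by auto
  have "\<forall>q\<in>proper_paths G u w. q \<noteq> p' \<longrightarrow> path_less G p' q"
  proof (intro ballI impI, rule ccontr)
    fix q assume q: "q \<in> proper_paths G u w" and qp: "q \<noteq> p'" and nl: "\<not> path_less G p' q"
    have qpath: "is_path G q" "distinct q" "hd q = u" "last q = w" "q \<noteq> []"
      using q unfolding proper_paths_def paths_from_to_def is_path_def by auto
    have "path_less G q p'"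
      using path_less_total[OF G qpath(1), of p'] p'in qpath qp nl
      unfolding proper_paths_def paths_from_to_def by auto
    then show False unfolding path_less_idx
    proof (elim disjE exE conjE)
      assume a: "length q < length p'" "take (length q) p' = q"
      have "last q = q ! (length q - 1)" using qpath by (simp add: last_conv_nth)
      also have "\<dots> = p' ! (length q - 1)" using take_pref_nth[OF a(2), of "length q - 1"] qpath a by simp
      also have "\<dots> = m ! (length q - 1)" unfolding p'_def
        by (rule nth_take) (use a in \<open>auto simp add: p'_def\<close>)
      finally have "m ! (length q - 1) = m ! k" using qpath w_def by simp
      then have "length q - 1 = k" using nth_eq_iff_index_eq[OF mpath(2)] a k' unfolding p'_def by simp
      then show False using a k' qpath unfolding p'_def by (cases q) auto
    next
      fix i assume a: "0 < i" "i < length q" "i < length p'" "take i q = take i p'"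
        "eord G (q ! (i - 1)) (q ! i) (p' ! i)"
      define W where "W = drop k m"
      have ik: "i \<le> k" using a(3) k' unfolding p'_def by simp
      have tqm: "take i q = take i m" using a(4) ik unfolding p'_def by (simp add: min_def)
      have disj: "set (take i q) \<inter> set W = {}"
        unfolding tqm W_def by (rule set_take_disj_set_drop_if_distinct[OF mpath(2) ik])
      have wW: "w \<in> set W" unfolding W_def w_def using k' by (simp add: Cons_nth_drop_Suc[symmetric])
      have "\<exists>x\<in>set q. x \<in> set W" using qpath wW by (metis last_in_set)
      then obtain a' x b where qs: "q = a' @ x # b" "x \<in> set W" "\<forall>y\<in>set a'. y \<notin> set W"
        using split_list_first_prop[of q "\<lambda>x. x \<in> set W"] by blast
      have la: "i \<le> length a'"
      proof (rule ccontr)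
        assume "\<not> i \<le> length a'"
        then have l1: "length a' < length (take i q)" using a(2) qs(1) by simp
        then have "take i q ! length a' \<in> set (take i q)" by (rule nth_mem)
        then have "q ! length a' \<in> set (take i q)" using l1 by simp
        moreover have "q ! length a' = x" using qs(1) by simp
        ultimately show False using disj qs(2) by blast
      qed
      obtain c d where Wd: "W = c @ x # d" using qs(2) split_list by metis
      define n where "n = a' @ x # d"
      have mW: "m = take k m @ W" unfolding W_def by simp
      have sq: "successively (\<lambda>x y. (x,y) \<in> arcs G) q" "successively (\<lambda>x y. (x,y) \<in> arcs G) m"
        using qpath mpath is_path_succ by blast+
      have sxd: "successively (\<lambda>x y. (x,y) \<in> arcs G) (x # d)"
      proof -
        have "successively (\<lambda>x y. (x,y) \<in> arcs G) (take k m @ W)"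
          using sq(2) by (simp only: append_take_drop_id W_def)
        then show ?thesis unfolding Wd successively_append_iff by auto
      qed
      have sa: "successively (\<lambda>x y. (x,y) \<in> arcs G) a'" "a' = [] \<or> (last a', x) \<in> arcs G"
        using sq(1) unfolding qs(1) successively_append_iff by auto
      have sn: "successively (\<lambda>x y. (x,y) \<in> arcs G) n"
        unfolding n_def successively_append_iff using sa sxd by auto
      have setn: "set n \<subseteq> set q \<union> set m"
      proof -
        have "set W \<subseteq> set m" unfolding W_def by (rule set_drop_subset)
        moreover have "set (x # d) \<subseteq> set W" unfolding Wd by auto
        ultimately show ?thesis unfolding n_def qs(1) by auto
      qed
      have npath: "is_path G n"
        unfolding is_path_succ using sn setn qpath(1) mpath(1) unfolding is_path_def n_def by auto
      have ndist: "distinct n"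
      proof -
        have "distinct W" unfolding W_def using mpath(2) by simp
        then have "distinct (x # d)" unfolding Wd by simp
        moreover have "set (x # d) \<subseteq> set W" unfolding Wd by auto
        ultimately show ?thesis using qpath(2) qs(3) unfolding qs(1) n_def by auto
      qed
      have ane: "a' \<noteq> []" using la a(1) by auto
      have nhd: "hd n = u" using qpath(3) ane unfolding n_def qs(1) by simp
      have Wne: "W \<noteq> []" using wW by auto
      have nlast: "last n = v"
      proof -
        have "last n = last (x # d)" unfolding n_def by simp
        also have "\<dots> = last W" unfolding Wd by simp
        also have "\<dots> = last m" unfolding W_def using k' by simp
        finally show ?thesis using mpath by simp
      qed
      have nin: "n \<in> proper_paths G u v"
        unfolding proper_paths_def paths_from_to_def using npath ndist nhd nlast by simp
      have nq: "\<And>j. j \<le> length a' \<Longrightarrow> n ! j = q ! j"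
        unfolding n_def qs(1) by (simp add: nth_append)
      have "path_less G n m" unfolding path_less_idx[of G n m]
      proof (intro disjI2 exI[of _ i] conjI)
        show "0 < i" by fact
        show "i < length n" using la unfolding n_def by simp
        show "i < length m" using ik k' by simp
        show "take i n = take i m" using la tqm unfolding n_def qs(1) by simp
        have "p' ! i = m ! i" using a(3) unfolding p'_def by simp
        then show "eord G (n ! (i - 1)) (n ! i) (m ! i)" using a(5) nq[of i] nq[of "i-1"] la by simp
      qed
      moreover have "n \<noteq> m \<Longrightarrow> path_less G m n" using mp nin by blast
      ultimately show False using path_less_trans[OF G] path_less_irrefl[OF G] by metis
    qed
  qed
  then have "min_path G u w = p'" using min_path_eq[OF G p'in] by simp
  then show ?thesis unfolding w_def p'_def m_def .
qed



lemma distinct_hd_last: "distinct p \<Longrightarrow> p \<noteq> [] \<Longrightarrow> hd p = last p \<Longrightarrow> p = [hd p]"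
  by (cases p rule: rev_cases) (auto simp: hd_append split: if_splits dest: hd_in_set)

lemma strict_linear_on_sub:
  assumes "strict_linear_on A r" "B \<subseteq> A" "\<And>x y. x \<in> B \<Longrightarrow> y \<in> B \<Longrightarrow> r' x y = r x y"
  shows "strict_linear_on B r'"
  using assms unfolding strict_linear_on_def by (simp add: subset_iff) blast

lemma Theta_simps[simp]:
  "verts (Theta G) = verts G" "arcs (Theta G) = theta_arcs G" "root (Theta G) = root G"
  "eord (Theta G) u v1 v2 = (eord G u v1 v2 \<and> (u, v1) \<in> theta_arcs G \<and> (u, v2) \<in> theta_arcs G)"
  unfolding Theta_def by simp_all

locale fcg =
  fixes G :: "('a, 'b) eograph_scheme"
  assumes fcg: "fin_conn_graph G"
begin

lemma G: "pointed_eo_graph G" and fin: "finite (verts G)" and conn: "connected_graph G"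
  using fcg unfolding fin_conn_graph_def by auto

abbreviation "M v \<equiv> min_path G (root G) v"

lemma M_prop:
  assumes "v \<in> verts G"
  shows "is_path G (M v)" "distinct (M v)" "hd (M v) = root G" "last (M v) = v"
    "M v \<noteq> []" "set (M v) \<subseteq> verts G"
  using min_path_prop[OF G fin conn_proper[OF conn assms]]
  unfolding proper_paths_def paths_from_to_def is_path_def by auto

lemma root_in: "root G \<in> verts G" using G unfolding pointed_eo_graph_def by simp

lemma M_root: "M (root G) = [root G]"
  using distinct_hd_last[OF M_prop(2,5)[OF root_in]] M_prop(3,4)[OF root_in] by simp

lemma M_prefix:
  assumes "v \<in> verts G" "k < length (M v)"
  shows "M (M v ! k) = take (Suc k) (M v)"
  using min_prefix[OF G fin conn_proper[OF conn assms(1)] assms(2)] .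

lemma TA1:
  assumes "(a, b) \<in> theta_arcs G"
  shows "(a, b) \<in> arcs G" "a \<in> verts G" "b \<in> verts G"
proof -
  from assms obtain i where b: "b \<in> verts G" "Suc i < length (M b)" "M b ! i = a" "M b ! Suc i = b"
    unfolding theta_arcs_def by auto
  show "(a, b) \<in> arcs G" using M_prop(1)[OF b(1)] b unfolding is_path_def by auto
  then show "a \<in> verts G" "b \<in> verts G" using G unfolding pointed_eo_graph_def by auto
qed

lemma TA2:
  assumes "(a, b) \<in> theta_arcs G"
  obtains i where "Suc (Suc i) = length (M b)" "M b ! i = a" "M b ! Suc i = b"
proof -
  from assms obtain i where b: "b \<in> verts G" "Suc i < length (M b)" "M b ! i = a" "M b ! Suc i = b"
    unfolding theta_arcs_def by auto
  have "last (M b) = M b ! (length (M b) - 1)" using M_prop(5)[OF b(1)] by (simp add: last_conv_nth)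
  then have "M b ! (length (M b) - 1) = M b ! Suc i" using M_prop(4)[OF b(1)] b by simp
  then have "length (M b) - 1 = Suc i" using nth_eq_iff_index_eq[OF M_prop(2)[OF b(1)]] b(2) by simp
  then have "Suc (Suc i) = length (M b)" using b(2) by linarith
  then show ?thesis using that b by blast
qed

lemma M_theta_path:
  assumes u: "u \<in> verts G"
  shows "is_path (Theta G) (M u)"
  unfolding is_path_def
proof (intro conjI allI impI)
  show "M u \<noteq> []" "set (M u) \<subseteq> verts (Theta G)" using M_prop[OF u] by auto
  fix i assume i: "Suc i < length (M u)"
  let ?b = "M u ! Suc i"
  have bv: "?b \<in> verts G" using M_prop(6)[OF u] i by (meson nth_mem subsetD)
  have pre: "M ?b = take (Suc (Suc i)) (M u)" using M_prefix[OF u i] .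
  have "Suc i < length (M ?b) \<and> M ?b ! i = M u ! i \<and> M ?b ! Suc i = ?b"
    unfolding pre using i by simp
  then show "(M u ! i, M u ! Suc i) \<in> arcs (Theta G)" using bv unfolding Theta_simps theta_arcs_def by blast
qed

lemma theta_path_unique:
  "is_path (Theta G) p \<longrightarrow> hd p = root G \<longrightarrow> p = M (last p)"
proof (induction p rule: rev_induct)
  case Nil then show ?case unfolding is_path_def by simp
next
  case (snoc x p0)
  show ?case
  proof (intro impI)
    assume pp: "is_path (Theta G) (p0 @ [x])" and hp: "hd (p0 @ [x]) = root G"
    show "p0 @ [x] = M (last (p0 @ [x]))"
    proof (cases "p0 = []")
      case True then show ?thesis using hp M_root by simp
    next
      case False
      have s: "successively (\<lambda>x y. (x,y) \<in> theta_arcs G) (p0 @ [x])" "set (p0 @ [x]) \<subseteq> verts G"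
        using pp unfolding is_path_succ by auto
      then have p0p: "is_path (Theta G) p0" and e: "(last p0, x) \<in> theta_arcs G"
        using False unfolding is_path_succ successively_append_iff by auto
      have "hd p0 = root G" using hp False by simp
      then have p0M: "p0 = M (last p0)" using snoc.IH p0p by simp
      obtain i where i: "Suc (Suc i) = length (M x)" "M x ! i = last p0" "M x ! Suc i = x"
        using TA2[OF e] by blast
      have xv: "x \<in> verts G" using TA1(3)[OF e] .
      have "M (M x ! i) = take (Suc i) (M x)" using M_prefix[OF xv, of i] i by simp
      then have "p0 = take (Suc i) (M x)" using p0M i by simp
      moreover have "take (Suc (Suc i)) (M x) = take (Suc i) (M x) @ [M x ! Suc i]"
        by (rule take_Suc_conv_app_nth) (use i(1) in simp)
      moreover have "take (Suc (Suc i)) (M x) = M x" using i(1) by simp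
      ultimately have "p0 @ [x] = M x" using i(3) by metis
      moreover have "last (p0 @ [x]) = x" by simp
      ultimately show ?thesis by metis
    qed
  qed
qed

lemma theta_fin_arb: "fin_arb (Theta G)"
  unfolding fin_arb_def
proof (intro conjI)
  show "finite (verts (Theta G))" using fin by simp
  show "pointed_eo_graph (Theta G)"
    unfolding pointed_eo_graph_def
  proof (intro conjI ballI allI impI)
    show "arcs (Theta G) \<subseteq> verts (Theta G) \<times> verts (Theta G)" using TA1 by auto
    show "root (Theta G) \<in> verts (Theta G)" using root_in by simp
    fix u v1 v2 assume "eord (Theta G) u v1 v2"
    then show "(u, v1) \<in> arcs (Theta G)" "(u, v2) \<in> arcs (Theta G)" by simp_all
  next
    fix u assume u: "u \<in> verts (Theta G)"
    have sl: "strict_linear_on (nbhd G u) (eord G u)" using G u unfolding pointed_eo_graph_def by simp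
    show "strict_linear_on (nbhd (Theta G) u) (eord (Theta G) u)"
      by (rule strict_linear_on_sub[OF sl]) (auto simp: nbhd_def dest: TA1)
  qed
  show "arborescence (Theta G)"
    unfolding arborescence_def
  proof
    fix u assume u: "u \<in> verts (Theta G)"
    then have u': "u \<in> verts G" by simp
    show "\<exists>!p. p \<in> paths_from_to (Theta G) (root (Theta G)) u"
    proof (rule ex1I[of _ "M u"])
      show "M u \<in> paths_from_to (Theta G) (root (Theta G)) u"
        unfolding paths_from_to_def using M_theta_path[OF u'] M_prop[OF u'] by simp
    next
      fix p assume "p \<in> paths_from_to (Theta G) (root (Theta G)) u"
      then show "p = M u" using theta_path_unique[of p] unfolding paths_from_to_def by auto
    qed
  qed
qed

end

theorem lemma10p3:
  fixes G :: "'a eograph" and H :: "'b eograph" and h :: "'a \<Rightarrow> 'b"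
  shows "(fin_conn_graph G \<longrightarrow> fin_arb (Theta G)) \<and>
         (fin_conn_graph G \<and> fin_conn_graph H \<and> lex_hom G H h \<longrightarrow>
            eo_hom (Theta G) (Theta H) h)"
proof (intro conjI impI)
  assume "fin_conn_graph G"
  then show "fin_arb (Theta G)" using fcg.theta_fin_arb fcg.intro by blast
next
  assume a: "fin_conn_graph G \<and> fin_conn_graph H \<and> lex_hom G H h"
  interpret g: fcg G using a fcg.intro by blast
  interpret hh: fcg H using a fcg.intro by blast
  have eh: "eo_hom G H h" and lx: "\<forall>u\<in>verts G. \<forall>v\<in>verts G. proper_paths G u v \<noteq> {} \<longrightarrow>
        map h (min_path G u v) = min_path H (h u) (h v)"
    using a unfolding lex_hom_def by auto
  have hr: "h (root G) = root H" using eh g.root_in unfolding eo_hom_def by blast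
  have tarcs: "(h u, h v) \<in> theta_arcs H" if uv: "(u, v) \<in> theta_arcs G" for u v
  proof -
    from uv obtain i where b: "v \<in> verts G" "Suc i < length (g.M v)" "g.M v ! i = u" "g.M v ! Suc i = v"
      unfolding theta_arcs_def by auto
    have mm: "map h (g.M v) = hh.M (h v)"
      using lx g.root_in b(1) conn_proper[OF g.conn b(1)] hr by auto
    have hv: "h v \<in> verts H" using eh b(1) unfolding eo_hom_def by blast
    have "Suc i < length (hh.M (h v)) \<and> hh.M (h v) ! i = h u \<and> hh.M (h v) ! Suc i = h v"
      unfolding mm[symmetric] using b by simp
    then show ?thesis using hv unfolding theta_arcs_def by auto
  qed
  show "eo_hom (Theta G) (Theta H) h"
    unfolding eo_hom_def using eh tarcs unfolding eo_hom_def by auto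
qed

end
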